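(* Let $\mathcal{T}$ be an essentially small triangulated category and let $(X,\sigma)$ be a classifying support data for $\mathcal{T}$. Then there is a homeomorphism $X\cong\operatorname{Spec}_\triangle(\mathcal{T})$.
   Context: A support data for $\mathcal{T}$ is a pair $(X,\sigma)$ of a topological space $X$ and an assignment $\sigma$ sending each object $M$ of $\mathcal{T}$ to a closed subset $\sigma(M)\subseteq X$ such that: $\sigma(0)=\emptyset$; $\sigma(M[n])=\sigma(M)$ for all $M$ and $n\in\mathbb{Z}$; $\sigma(M)\subseteq\sigma(L)\cup\sigma(N)$ for every exact triangle $L\to M\to N\to L[1]$; and $\sigma(M\oplus N)=\sigma(M)\cup\sigma(N)$. It is classifying if (i) $X$ is a noetherian sober space (sober: every irreducible closed subset has a unique generic point), and (ii) the maps $\mathcal{X}\mapsto\sigma(\mathcal{X}):=\bigcup_{M\in\mathcal{X}}\sigma(M)$ and $W\mapsto\sigma^{-1}(W):=\{M\in\mathcal{T}\mid\sigma(M)\subseteq W\}$ are mutually inverse lattice isomorphisms between the set of thick subcategories of $\mathcal{T}$ and the set of specialization-closed subsets of $X$ (unions of closed subsets). A thick subcategory $\mathcal{P}$ of $\mathcal{T}$ is called prime if among all thick subcategories $\mathcal{X}$ with $\mathcal{P}\subsetneq\mathcal{X}$ there is a unique minimal one. $\operatorname{Spec}_\triangle(\mathcal{T})$ is the set of prime thick subcategories, with closed subsets $\mathsf{Z}(\mathcal{E}):=\{\mathcal{P}\mid\mathcal{P}\cap\mathcal{E}=\emptyset\}$ for families $\mathcal{E}$ of objects of $\mathcal{T}$.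 *)

theory Defs
  imports "HOL-Analysis.Analysis"
begin

record ('o, 'm) tricat =
  Ob   :: "'o set"
  Arr  :: "'m set"
  Dom  :: "'m \<Rightarrow> 'o"
  Cod  :: "'m \<Rightarrow> 'o"
  Id   :: "'o \<Rightarrow> 'm"
  Comp :: "'m \<Rightarrow> 'm \<Rightarrow> 'm"      (* Comp g f = g o f *)
  Add  :: "'m \<Rightarrow> 'm \<Rightarrow> 'm"
  Neg  :: "'m \<Rightarrow> 'm"
  Zero :: "'o \<Rightarrow> 'o \<Rightarrow> 'm"
  ShO  :: "'o \<Rightarrow> 'o"
  ShM  :: "'m \<Rightarrow> 'm"
  Dist :: "('o \<times> 'o \<times> 'o \<times> 'm \<times> 'm \<times> 'm) set"

definition Hom :: "('o, 'm, 'z) tricat_scheme \<Rightarrow> 'o \<Rightarrow> 'o \<Rightarrow> 'm set" where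
  "Hom C A B = {f \<in> Arr C. Dom C f = A \<and> Cod C f = B}"

definition is_category :: "('o, 'm, 'z) tricat_scheme \<Rightarrow> bool" where
  "is_category C \<longleftrightarrow>
     (\<forall>f \<in> Arr C. Dom C f \<in> Ob C \<and> Cod C f \<in> Ob C) \<and>
     (\<forall>A \<in> Ob C. Id C A \<in> Hom C A A) \<and>
     (\<forall>A \<in> Ob C. \<forall>B \<in> Ob C. \<forall>D \<in> Ob C. \<forall>f \<in> Hom C A B. \<forall>g \<in> Hom C B D.
        Comp C g f \<in> Hom C A D) \<and>
     (\<forall>f \<in> Arr C. Comp C (Id C (Cod C f)) f = f \<and> Comp C f (Id C (Dom C f)) = f) \<and>
     (\<forall>f \<in> Arr C. \<forall>g \<in> Arr C. \<forall>h \<in> Arr C. Cod C f = Dom C g \<longrightarrow> Cod C g = Dom C h \<longrightarrow>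
        Comp C h (Comp C g f) = Comp C (Comp C h g) f)"

definition is_preadditive :: "('o, 'm, 'z) tricat_scheme \<Rightarrow> bool" where
  "is_preadditive C \<longleftrightarrow> is_category C \<and>
     (\<forall>A \<in> Ob C. \<forall>B \<in> Ob C.
        Zero C A B \<in> Hom C A B \<and>
        (\<forall>f \<in> Hom C A B. \<forall>g \<in> Hom C A B. Add C f g \<in> Hom C A B) \<and>
        (\<forall>f \<in> Hom C A B. Neg C f \<in> Hom C A B) \<and>
        (\<forall>f \<in> Hom C A B. \<forall>g \<in> Hom C A B. \<forall>h \<in> Hom C A B.
            Add C (Add C f g) h = Add C f (Add C g h)) \<and>
        (\<forall>f \<in> Hom C A B. \<forall>g \<in> Hom C A B. Add C f g = Add C g f) \<and>
        (\<forall>f \<in> Hom C A B. Add C (Zero C A B) f = f) \<and>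
        (\<forall>f \<in> Hom C A B. Add C f (Neg C f) = Zero C A B)) \<and>
     (\<forall>A \<in> Ob C. \<forall>B \<in> Ob C. \<forall>D \<in> Ob C. \<forall>f \<in> Hom C A B. \<forall>g \<in> Hom C A B. \<forall>h \<in> Hom C B D.
        Comp C h (Add C f g) = Add C (Comp C h f) (Comp C h g)) \<and>
     (\<forall>A \<in> Ob C. \<forall>B \<in> Ob C. \<forall>D \<in> Ob C. \<forall>f \<in> Hom C A B. \<forall>g \<in> Hom C B D. \<forall>h \<in> Hom C B D.
        Comp C (Add C g h) f = Add C (Comp C g f) (Comp C h f))"

definition is_zero_obj :: "('o, 'm, 'z) tricat_scheme \<Rightarrow> 'o \<Rightarrow> bool" where
  "is_zero_obj C Z \<longleftrightarrow> Z \<in> Ob C \<and>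
     (\<forall>A \<in> Ob C. (\<exists>!f. f \<in> Hom C Z A) \<and> (\<exists>!f. f \<in> Hom C A Z))"

definition is_biproduct :: "('o, 'm, 'z) tricat_scheme \<Rightarrow> 'o \<Rightarrow> 'o \<Rightarrow> 'o \<Rightarrow> bool" where
  "is_biproduct C M N S \<longleftrightarrow> M \<in> Ob C \<and> N \<in> Ob C \<and> S \<in> Ob C \<and>
     (\<exists>i1 \<in> Hom C M S. \<exists>i2 \<in> Hom C N S. \<exists>p1 \<in> Hom C S M. \<exists>p2 \<in> Hom C S N.
        Comp C p1 i1 = Id C M \<and> Comp C p2 i2 = Id C N \<and>
        Comp C p1 i2 = Zero C N M \<and> Comp C p2 i1 = Zero C M N \<and>
        Add C (Comp C i1 p1) (Comp C i2 p2) = Id C S)"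

definition is_additive :: "('o, 'm, 'z) tricat_scheme \<Rightarrow> bool" where
  "is_additive C \<longleftrightarrow> is_preadditive C \<and> (\<exists>Z. is_zero_obj C Z) \<and>
     (\<forall>M \<in> Ob C. \<forall>N \<in> Ob C. \<exists>S. is_biproduct C M N S)"

definition shift_ok :: "('o, 'm, 'z) tricat_scheme \<Rightarrow> bool" where
  "shift_ok C \<longleftrightarrow>
     bij_betw (ShO C) (Ob C) (Ob C) \<and> bij_betw (ShM C) (Arr C) (Arr C) \<and>
     (\<forall>f \<in> Arr C. Dom C (ShM C f) = ShO C (Dom C f) \<and> Cod C (ShM C f) = ShO C (Cod C f)) \<and>
     (\<forall>A \<in> Ob C. ShM C (Id C A) = Id C (ShO C A)) \<and>
     (\<forall>f \<in> Arr C. \<forall>g \<in> Arr C. Cod C f = Dom C g \<longrightarrow>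
        ShM C (Comp C g f) = Comp C (ShM C g) (ShM C f)) \<and>
     (\<forall>A \<in> Ob C. \<forall>B \<in> Ob C. \<forall>f \<in> Hom C A B. \<forall>g \<in> Hom C A B.
        ShM C (Add C f g) = Add C (ShM C f) (ShM C g))"

definition is_iso :: "('o, 'm, 'z) tricat_scheme \<Rightarrow> 'm \<Rightarrow> bool" where
  "is_iso C f \<longleftrightarrow> f \<in> Arr C \<and>
     (\<exists>g \<in> Hom C (Cod C f) (Dom C f). Comp C g f = Id C (Dom C f) \<and> Comp C f g = Id C (Cod C f))"

definition is_triangle :: "('o, 'm, 'z) tricat_scheme \<Rightarrow> ('o \<times> 'o \<times> 'o \<times> 'm \<times> 'm \<times> 'm) \<Rightarrow> bool" where
  "is_triangle C T = (case T of (X, Y, Z, u, v, w) \<Rightarrow>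
     X \<in> Ob C \<and> Y \<in> Ob C \<and> Z \<in> Ob C \<and>
     u \<in> Hom C X Y \<and> v \<in> Hom C Y Z \<and> w \<in> Hom C Z (ShO C X))"

definition tri_morph :: "('o, 'm, 'z) tricat_scheme \<Rightarrow> ('o \<times> 'o \<times> 'o \<times> 'm \<times> 'm \<times> 'm)
     \<Rightarrow> ('o \<times> 'o \<times> 'o \<times> 'm \<times> 'm \<times> 'm) \<Rightarrow> 'm \<Rightarrow> 'm \<Rightarrow> 'm \<Rightarrow> bool" where
  "tri_morph C T T' a b c = (case T of (X, Y, Z, u, v, w) \<Rightarrow> case T' of (X', Y', Z', u', v', w') \<Rightarrow>
     a \<in> Hom C X X' \<and> b \<in> Hom C Y Y' \<and> c \<in> Hom C Z Z' \<and>
     Comp C b u = Comp C u' a \<and> Comp C c v = Comp C v' b \<and>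
     Comp C (ShM C a) w = Comp C w' c)"

definition rotate :: "('o, 'm, 'z) tricat_scheme \<Rightarrow> ('o \<times> 'o \<times> 'o \<times> 'm \<times> 'm \<times> 'm)
     \<Rightarrow> ('o \<times> 'o \<times> 'o \<times> 'm \<times> 'm \<times> 'm)" where
  "rotate C T = (case T of (X, Y, Z, u, v, w) \<Rightarrow> (Y, Z, ShO C X, v, w, Neg C (ShM C u)))"

definition is_triangulated :: "('o, 'm, 'z) tricat_scheme \<Rightarrow> bool" where
  "is_triangulated C \<longleftrightarrow> is_additive C \<and> shift_ok C \<and>
     (\<forall>T \<in> Dist C. is_triangle C T) \<and>
     \<comment> \<open>TR1: closed under isomorphisms of triangles\<close>
     (\<forall>T \<in> Dist C. \<forall>T'. \<forall>a b c. is_triangle C T' \<and> tri_morph C T T' a b c \<and>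
        is_iso C a \<and> is_iso C b \<and> is_iso C c \<longrightarrow> T' \<in> Dist C) \<and>
     \<comment> \<open>TR1: X \<rightarrow> X \<rightarrow> 0 \<rightarrow> X[1] is distinguished\<close>
     (\<forall>X \<in> Ob C. \<forall>Z. is_zero_obj C Z \<longrightarrow>
        (X, X, Z, Id C X, Zero C X Z, Zero C Z (ShO C X)) \<in> Dist C) \<and>
     \<comment> \<open>TR1: every morphism extends to a distinguished triangle\<close>
     (\<forall>u \<in> Arr C. \<exists>Z v w. (Dom C u, Cod C u, Z, u, v, w) \<in> Dist C) \<and>
     \<comment> \<open>TR2: rotation\<close>
     (\<forall>T. is_triangle C T \<longrightarrow> (T \<in> Dist C \<longleftrightarrow> rotate C T \<in> Dist C)) \<and>
     \<comment> \<open>TR3: completion of morphisms\<close>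
     (\<forall>X Y Z u v w X' Y' Z' u' v' w' a b.
        (X, Y, Z, u, v, w) \<in> Dist C \<and> (X', Y', Z', u', v', w') \<in> Dist C \<and>
        a \<in> Hom C X X' \<and> b \<in> Hom C Y Y' \<and> Comp C b u = Comp C u' a \<longrightarrow>
        (\<exists>c. tri_morph C (X, Y, Z, u, v, w) (X', Y', Z', u', v', w') a b c)) \<and>
     \<comment> \<open>TR4: octahedral axiom\<close>
     (\<forall>X Y Z Z' X' Y' u v j k l i m n.
        (X, Y, Z', u, j, k) \<in> Dist C \<and> (Y, Z, X', v, l, i) \<in> Dist C \<and>
        (X, Z, Y', Comp C v u, m, n) \<in> Dist C \<longrightarrow>
        (\<exists>f g. f \<in> Hom C Z' Y' \<and> g \<in> Hom C Y' X' \<and>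
           (Z', Y', X', f, g, Comp C (ShM C j) i) \<in> Dist C \<and>
           Comp C f j = Comp C m v \<and> Comp C n f = k \<and>
           Comp C g m = l \<and> Comp C (ShM C u) n = Comp C i g))"

text \<open>Thick subcategories, identified with their (full, replete) sets of objects.\<close>
definition thick :: "('o, 'm, 'z) tricat_scheme \<Rightarrow> 'o set \<Rightarrow> bool" where
  "thick C \<X> \<longleftrightarrow> \<X> \<subseteq> Ob C \<and> \<X> \<noteq> {} \<and>
     (\<forall>M \<in> Ob C. M \<in> \<X> \<longleftrightarrow> ShO C M \<in> \<X>) \<and>
     (\<forall>L M N u v w. (L, M, N, u, v, w) \<in> Dist C \<longrightarrow>
        (L \<in> \<X> \<and> M \<in> \<X> \<longrightarrow> N \<in> \<X>) \<and> (M \<in> \<X> \<and> N \<in> \<X> \<longrightarrow> L \<in> \<X>) \<and>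
        (L \<in> \<X> \<and> N \<in> \<X> \<longrightarrow> M \<in> \<X>)) \<and>
     (\<forall>M N S. is_biproduct C M N S \<and> S \<in> \<X> \<longrightarrow> M \<in> \<X>)"

definition shiftn :: "('o, 'm, 'z) tricat_scheme \<Rightarrow> int \<Rightarrow> 'o \<Rightarrow> 'o" where
  "shiftn C n M = (if 0 \<le> n then (ShO C ^^ nat n) M
                   else (the_inv_into (Ob C) (ShO C) ^^ nat (- n)) M)"

definition support_data :: "('o, 'm, 'z) tricat_scheme \<Rightarrow> 'b topology \<Rightarrow> ('o \<Rightarrow> 'b set) \<Rightarrow> bool" where
  "support_data C X \<sigma> \<longleftrightarrow>
     (\<forall>M \<in> Ob C. closedin X (\<sigma> M)) \<and>
     (\<forall>Z. is_zero_obj C Z \<longrightarrow> \<sigma> Z = {}) \<and>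
     (\<forall>M \<in> Ob C. \<forall>n::int. \<sigma> (shiftn C n M) = \<sigma> M) \<and>
     (\<forall>L M N u v w. (L, M, N, u, v, w) \<in> Dist C \<longrightarrow> \<sigma> M \<subseteq> \<sigma> L \<union> \<sigma> N) \<and>
     (\<forall>M N S. is_biproduct C M N S \<longrightarrow> \<sigma> S = \<sigma> M \<union> \<sigma> N)"

definition noetherian_space :: "'b topology \<Rightarrow> bool" where
  "noetherian_space X \<longleftrightarrow>
     (\<forall>F :: nat \<Rightarrow> 'b set. (\<forall>k. closedin X (F k)) \<and> (\<forall>k. F (Suc k) \<subseteq> F k) \<longrightarrow>
        (\<exists>N. \<forall>k\<ge>N. F k = F N))"

definition irreducible_in :: "'b topology \<Rightarrow> 'b set \<Rightarrow> bool" where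
  "irreducible_in X Z \<longleftrightarrow> Z \<noteq> {} \<and>
     (\<forall>Z1 Z2. closedin X Z1 \<and> closedin X Z2 \<and> Z = Z1 \<union> Z2 \<longrightarrow> Z = Z1 \<or> Z = Z2)"

definition sober_space :: "'b topology \<Rightarrow> bool" where
  "sober_space X \<longleftrightarrow>
     (\<forall>Z. closedin X Z \<and> irreducible_in X Z \<longrightarrow> (\<exists>!x. x \<in> topspace X \<and> X closure_of {x} = Z))"

definition spec_closed :: "'b topology \<Rightarrow> 'b set \<Rightarrow> bool" where
  "spec_closed X W \<longleftrightarrow> (\<exists>\<C>. (\<forall>Z \<in> \<C>. closedin X Z) \<and> W = \<Union>\<C>)"

definition supp_of :: "('o \<Rightarrow> 'b set) \<Rightarrow> 'o set \<Rightarrow> 'b set" where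
  "supp_of \<sigma> \<X> = (\<Union>M \<in> \<X>. \<sigma> M)"

definition supp_inv :: "('o, 'm, 'z) tricat_scheme \<Rightarrow> ('o \<Rightarrow> 'b set) \<Rightarrow> 'b set \<Rightarrow> 'o set" where
  "supp_inv C \<sigma> W = {M \<in> Ob C. \<sigma> M \<subseteq> W}"

definition classifying :: "('o, 'm, 'z) tricat_scheme \<Rightarrow> 'b topology \<Rightarrow> ('o \<Rightarrow> 'b set) \<Rightarrow> bool" where
  "classifying C X \<sigma> \<longleftrightarrow> support_data C X \<sigma> \<and> noetherian_space X \<and> sober_space X \<and>
     (\<forall>\<X>. thick C \<X> \<longrightarrow> spec_closed X (supp_of \<sigma> \<X>) \<and> supp_inv C \<sigma> (supp_of \<sigma> \<X>) = \<X>) \<and>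
     (\<forall>W. spec_closed X W \<longrightarrow> thick C (supp_inv C \<sigma> W) \<and> supp_of \<sigma> (supp_inv C \<sigma> W) = W)"

definition prime_thick :: "('o, 'm, 'z) tricat_scheme \<Rightarrow> 'o set \<Rightarrow> bool" where
  "prime_thick C \<P> \<longleftrightarrow> thick C \<P> \<and>
     (\<exists>!\<Q>. thick C \<Q> \<and> \<P> \<subset> \<Q> \<and> (\<forall>\<X>. thick C \<X> \<and> \<P> \<subset> \<X> \<and> \<X> \<subseteq> \<Q> \<longrightarrow> \<X> = \<Q>))"

definition Spec_pts :: "('o, 'm, 'z) tricat_scheme \<Rightarrow> 'o set set" where
  "Spec_pts C = {\<P>. prime_thick C \<P>}"

definition ZZ :: "('o, 'm, 'z) tricat_scheme \<Rightarrow> 'o set \<Rightarrow> 'o set set" where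
  "ZZ C \<E> = {\<P> \<in> Spec_pts C. \<P> \<inter> \<E> = {}}"

definition Spec_tri :: "('o, 'm, 'z) tricat_scheme \<Rightarrow> 'o set topology" where
  "Spec_tri C = topology_generated_by (insert (Spec_pts C) {Spec_pts C - ZZ C \<E> | \<E>. True})"

end

theory Submission
  imports Defs
begin

locale cls =
  fixes C :: "('o, 'm) tricat" and X :: "'b topology" and \<sigma> :: "'o \<Rightarrow> 'b set"
  assumes cl: "classifying C X \<sigma>"
begin

definition clp :: "'b \<Rightarrow> 'b set" where "clp x = X closure_of {x}"
definition YY :: "'b \<Rightarrow> 'b set" where "YY x = {y \<in> topspace X. x \<notin> clp y}"
definition ff :: "'b \<Rightarrow> 'o set" where "ff x = {M \<in> Ob C. x \<notin> \<sigma> M}"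

lemma cparts1: "support_data C X \<sigma>" using cl by (simp add: classifying_def)
lemma cparts2: "noetherian_space X" using cl by (simp add: classifying_def)
lemma cparts3: "sober_space X" using cl by (simp add: classifying_def)
lemma cparts4: "\<forall>\<X>. thick C \<X> \<longrightarrow> spec_closed X (supp_of \<sigma> \<X>) \<and> supp_inv C \<sigma> (supp_of \<sigma> \<X>) = \<X>"
  using cl by (simp add: classifying_def)
lemma cparts5: "\<forall>W. spec_closed X W \<longrightarrow> thick C (supp_inv C \<sigma> W) \<and> supp_of \<sigma> (supp_inv C \<sigma> W) = W"
  using cl by (simp add: classifying_def)
lemmas cparts = cparts1 cparts2 cparts3 cparts4 cparts5

lemma sclosed: "M \<in> Ob C \<Longrightarrow> closedin X (\<sigma> M)"
  using cparts(1)[unfolded support_data_def, THEN conjunct1] by (rule bspec)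

lemma iso1: "thick C Z \<Longrightarrow> spec_closed X (supp_of \<sigma> Z) \<and> supp_inv C \<sigma> (supp_of \<sigma> Z) = Z"
  using cparts(4) by (rule allE) (erule mp)

lemma iso2: "spec_closed X W \<Longrightarrow> thick C (supp_inv C \<sigma> W) \<and> supp_of \<sigma> (supp_inv C \<sigma> W) = W"
  using cparts(5) by (rule allE) (erule mp)

lemma noeth: "noetherian_space X" and sober: "sober_space X"
  using cparts by auto

lemma clp_closed[simp]: "closedin X (clp x)" by (simp add: clp_def)

lemma clp_in: "x \<in> topspace X \<Longrightarrow> x \<in> clp x"
  using closure_of_subset[of "{x}" X] by (auto simp: clp_def)

lemma clp_min: "closedin X T \<Longrightarrow> x \<in> T \<Longrightarrow> clp x \<subseteq> T"
  by (simp add: clp_def closure_of_minimal)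

lemma clp_top: "clp x \<subseteq> topspace X"
  using closedin_subset clp_closed by blast

lemma clp_trans: "y \<in> clp x \<Longrightarrow> clp y \<subseteq> clp x"
  by (simp add: clp_min)

lemma spec_closed_cl: "spec_closed X W \<Longrightarrow> v \<in> W \<Longrightarrow> clp v \<subseteq> W"
  unfolding spec_closed_def by (metis UnionE Union_upper clp_min subset_trans)

lemma spec_closed_top: "spec_closed X W \<Longrightarrow> W \<subseteq> topspace X"
  unfolding spec_closed_def using closedin_subset by blast

lemma spec_closed_closed: "closedin X K \<Longrightarrow> spec_closed X K"
  unfolding spec_closed_def by (rule exI[of _ "{K}"]) auto

lemma spec_closed_Un: "spec_closed X A \<Longrightarrow> spec_closed X B \<Longrightarrow> spec_closed X (A \<union> B)"
  unfolding spec_closed_def by (metis Union_Un_distrib UnE)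

lemma thick_sub: "thick C Z \<Longrightarrow> Z \<subseteq> Ob C" by (simp add: thick_def)

lemma supp_of_mono: "A \<subseteq> B \<Longrightarrow> supp_of \<sigma> A \<subseteq> supp_of \<sigma> B"
  unfolding supp_of_def by blast

lemma supp_inv_mono: "A \<subseteq> B \<Longrightarrow> supp_inv C \<sigma> A \<subseteq> supp_inv C \<sigma> B"
  unfolding supp_inv_def by blast

lemma YY_spec: "spec_closed X (YY x)"
  unfolding spec_closed_def
proof (intro exI[of _ "clp ` YY x"] conjI)
  show "\<forall>Z\<in>clp ` YY x. closedin X Z" by auto
  show "YY x = \<Union> (clp ` YY x)"
  proof
    show "YY x \<subseteq> \<Union> (clp ` YY x)" using clp_in unfolding YY_def by blast
    show "\<Union> (clp ` YY x) \<subseteq> YY x"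
      unfolding YY_def using clp_trans clp_top by blast
  qed
qed

lemma ff_eq: "x \<in> topspace X \<Longrightarrow> ff x = supp_inv C \<sigma> (YY x)"
proof -
  assume x: "x \<in> topspace X"
  have "x \<notin> \<sigma> M \<longleftrightarrow> \<sigma> M \<subseteq> YY x" if M: "M \<in> Ob C" for M
  proof
    assume "x \<notin> \<sigma> M"
    then show "\<sigma> M \<subseteq> YY x" unfolding YY_def
      using clp_min[OF sclosed[OF M]] closedin_subset[OF sclosed[OF M]] by blast
  next
    assume "\<sigma> M \<subseteq> YY x"
    then show "x \<notin> \<sigma> M" unfolding YY_def using clp_in[OF x] by blast
  qed
  then show ?thesis unfolding ff_def supp_inv_def by blast
qed

lemma clp_irred: "x \<in> topspace X \<Longrightarrow> irreducible_in X (clp x)"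
  unfolding irreducible_in_def
  by (metis Un_iff clp_in clp_min empty_iff subset_antisym sup.cobounded1 sup.cobounded2)

lemma clp_inj: "x \<in> topspace X \<Longrightarrow> y \<in> topspace X \<Longrightarrow> clp x = clp y \<Longrightarrow> x = y"
  using sober clp_irred unfolding sober_space_def clp_def by (metis clp_closed clp_def)

lemma wfR: "wf {(S,T). closedin X S \<and> closedin X T \<and> S \<subset> T}"
proof -
  have "\<not> (\<exists>g. \<forall>i. (g (Suc i), g i) \<in> {(S,T). closedin X S \<and> closedin X T \<and> S \<subset> T})"
  proof
    assume "\<exists>g. \<forall>i. (g (Suc i), g i) \<in> {(S,T). closedin X S \<and> closedin X T \<and> S \<subset> T}"
    then obtain g where g0: "\<forall>i. (g (Suc i), g i) \<in> {(S,T). closedin X S \<and> closedin X T \<and> S \<subset> T}" by (erule exE)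
    then have g: "\<And>i. closedin X (g i)" "\<And>i. g (Suc i) \<subset> g i" by auto
    have "(\<forall>k. closedin X (g k)) \<and> (\<forall>k. g (Suc k) \<subseteq> g k)"
      using g by (simp add: less_imp_le)
    from noeth[unfolded noetherian_space_def, rule_format, OF this]
    obtain N where "\<forall>k\<ge>N. g k = g N" by (erule exE)
    then have "N \<le> Suc N \<longrightarrow> g (Suc N) = g N" by (rule spec)
    then have "g (Suc N) = g N" by simp
    with g(2)[of N] show False by simp
  qed
  then show ?thesis using wf_iff_no_infinite_down_chain by blast
qed

lemma min_pt:
  assumes "A \<subseteq> topspace X" "a \<in> A"
  shows "\<exists>w\<in>A. \<forall>w'\<in>A. clp w' \<subseteq> clp w \<longrightarrow> clp w' = clp w"
proof -
  from wfE_min[OF wfR, of "clp a" "clp ` A"] assms(2)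
  obtain z where "z \<in> clp ` A" "\<And>y. (y, z) \<in> {(S,T). closedin X S \<and> closedin X T \<and> S \<subset> T} \<Longrightarrow> y \<notin> clp ` A"
    by blast
  then obtain x where x: "x \<in> A" and m: "\<And>w'. w' \<in> A \<Longrightarrow> \<not> clp w' \<subset> clp x"
  proof -
    assume H: "\<And>x. x \<in> A \<Longrightarrow> (\<And>w'. w' \<in> A \<Longrightarrow> \<not> clp w' \<subset> clp x) \<Longrightarrow> thesis"
    from \<open>z \<in> clp ` A\<close> obtain x where x: "x \<in> A" "z = clp x" by blast
    show thesis
    proof (rule H[OF x(1)])
      fix w' assume w': "w' \<in> A"
      have "clp w' \<in> clp ` A" using w' by (rule imageI)
      then have "(clp w', z) \<notin> {(S,T). closedin X S \<and> closedin X T \<and> S \<subset> T}"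
        using \<open>\<And>y. (y, z) \<in> {(S,T). closedin X S \<and> closedin X T \<and> S \<subset> T} \<Longrightarrow> y \<notin> clp ` A\<close> by blast
      then show "\<not> clp w' \<subset> clp x" using x(2) by simp
    qed
  qed
  show ?thesis
    by (rule bexI[OF _ x]) (use m in blast)
qed

end

context cls begin

lemma ff_prime:
  assumes x: "x \<in> topspace X"
  shows "prime_thick C (ff x)"
proof -
  define Q where "Q = supp_inv C \<sigma> (YY x \<union> clp x)"
  have specQ: "spec_closed X (YY x \<union> clp x)"
    by (simp add: YY_spec spec_closed_Un spec_closed_closed)
  have Pe: "ff x = supp_inv C \<sigma> (YY x)" using ff_eq[OF x] .
  have thP: "thick C (ff x)" and sP: "supp_of \<sigma> (ff x) = YY x"
    using iso2[OF YY_spec] Pe by auto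
  have thQ: "thick C Q" and sQ: "supp_of \<sigma> Q = YY x \<union> clp x"
    using iso2[OF specQ] Q_def by auto
  have xnY: "x \<notin> YY x" using clp_in[OF x] unfolding YY_def by blast
  have key: "YY x \<union> clp x \<subseteq> supp_of \<sigma> Z" if Z: "thick C Z" "ff x \<subset> Z" for Z
  proof -
    define V where "V = supp_of \<sigma> Z"
    have spV: "spec_closed X V" and ZV: "supp_inv C \<sigma> V = Z" using iso1[OF Z(1)] V_def by auto
    have YV: "YY x \<subseteq> V" using supp_of_mono[of "ff x" Z] Z(2) sP V_def by auto
    have "V \<noteq> YY x" using ZV Pe Z(2) by auto
    then obtain v where v: "v \<in> V" "v \<notin> YY x" using YV by blast
    have "v \<in> topspace X" using spec_closed_top[OF spV] v by blast
    then have "x \<in> clp v" using v unfolding YY_def by blast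
    then have "clp x \<subseteq> V" using clp_trans spec_closed_cl[OF spV v(1)] by blast
    then show ?thesis using YV V_def by blast
  qed
  have PQ: "ff x \<subset> Q"
  proof
    show "ff x \<subseteq> Q" unfolding Pe Q_def by (rule supp_inv_mono) blast
    show "ff x \<noteq> Q" using sP sQ xnY clp_in[OF x] by auto
  qed
  have minQ: "Z = Q" if "thick C Z" "ff x \<subset> Z" "Z \<subseteq> Q" for Z
  proof -
    have "supp_of \<sigma> Z = YY x \<union> clp x"
      using key[OF that(1,2)] supp_of_mono[OF that(3)] sQ by blast
    then show ?thesis using iso1[OF that(1)] Q_def by metis
  qed
  show ?thesis unfolding prime_thick_def
  proof (rule conjI[OF thP], rule ex1I[of _ Q])
    show "thick C Q \<and> ff x \<subset> Q \<and> (\<forall>Z. thick C Z \<and> ff x \<subset> Z \<and> Z \<subseteq> Q \<longrightarrow> Z = Q)"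
      using thQ PQ minQ by blast
    fix Q' assume Q': "thick C Q' \<and> ff x \<subset> Q' \<and> (\<forall>Z. thick C Z \<and> ff x \<subset> Z \<and> Z \<subseteq> Q' \<longrightarrow> Z = Q')"
    have "Q \<subseteq> Q'" unfolding Q_def
      using supp_inv_mono[OF key[of Q']] Q' iso1[of Q'] by metis
    then show "Q' = Q" using Q' thQ PQ by blast
  qed
qed

lemma ff_surj:
  assumes pr: "prime_thick C P"
  shows "\<exists>x\<in>topspace X. P = ff x"
proof -
  from pr obtain Q where thP: "thick C P" and thQ: "thick C Q" and PQ: "P \<subset> Q"
    and uniq: "\<And>Q'. thick C Q' \<Longrightarrow> P \<subset> Q' \<Longrightarrow> (\<forall>Z. thick C Z \<and> P \<subset> Z \<and> Z \<subseteq> Q' \<longrightarrow> Z = Q') \<Longrightarrow> Q' = Q"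
    unfolding prime_thick_def by metis
  define W where "W = supp_of \<sigma> P"
  have spW: "spec_closed X W" and PW: "supp_inv C \<sigma> W = P" using iso1[OF thP] W_def by auto
  define mini where "mini w \<longleftrightarrow> w \<in> topspace X - W \<and> (\<forall>w'\<in>topspace X - W. clp w' \<subseteq> clp w \<longrightarrow> clp w' = clp w)" for w
  have claim1: "supp_of \<sigma> Q = W \<union> clp w" if mw: "mini w" for w
  proof -
    define Qw where "Qw = supp_inv C \<sigma> (W \<union> clp w)"
    have sp: "spec_closed X (W \<union> clp w)" by (simp add: spW spec_closed_Un spec_closed_closed)
    have thQw: "thick C Qw" and sQw: "supp_of \<sigma> Qw = W \<union> clp w" using iso2[OF sp] Qw_def by auto
    have w: "w \<in> topspace X" "w \<notin> W" using mw mini_def by auto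
    have PQw: "P \<subset> Qw"
    proof
      show "P \<subseteq> Qw" unfolding Qw_def PW[symmetric] by (rule supp_inv_mono) blast
      show "P \<noteq> Qw" using sQw W_def w clp_in[OF w(1)] by auto
    qed
    have "\<forall>Z. thick C Z \<and> P \<subset> Z \<and> Z \<subseteq> Qw \<longrightarrow> Z = Qw"
    proof (intro allI impI)
      fix Z assume Z: "thick C Z \<and> P \<subset> Z \<and> Z \<subseteq> Qw"
      define V where "V = supp_of \<sigma> Z"
      have spV: "spec_closed X V" and ZV: "supp_inv C \<sigma> V = Z" using iso1[of Z] Z V_def by auto
      have WV: "W \<subseteq> V" using supp_of_mono[of P Z] Z W_def V_def by auto
      have VW: "V \<subseteq> W \<union> clp w" using supp_of_mono[of Z Qw] Z sQw V_def by auto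
      have "V \<noteq> W" using ZV PW Z by auto
      then obtain v where v: "v \<in> V" "v \<notin> W" using WV by blast
      have vt: "v \<in> topspace X" using spec_closed_top[OF spV] v by blast
      have "v \<in> clp w" using v VW by blast
      then have "clp v \<subseteq> clp w" by (rule clp_trans)
      then have "clp v = clp w" using mw vt v unfolding mini_def by blast
      then have "clp w \<subseteq> V" using spec_closed_cl[OF spV v(1)] by simp
      then have "V = W \<union> clp w" using WV VW by blast
      then show "Z = Qw" using ZV Qw_def by simp
    qed
    then have "Qw = Q" using uniq thQw PQw by blast
    then show ?thesis using sQw by simp
  qed
  have claim2: "\<exists>w. mini w \<and> w \<in> clp z" if z: "z \<in> topspace X - W" for z
  proof -
    have "clp z - W \<subseteq> topspace X" "z \<in> clp z - W" using clp_top clp_in z by auto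
    from min_pt[OF this] obtain w where w: "w \<in> clp z - W"
      and m: "\<forall>w'\<in>clp z - W. clp w' \<subseteq> clp w \<longrightarrow> clp w' = clp w" by blast
    have "mini w" unfolding mini_def
    proof (intro conjI ballI impI)
      show "w \<in> topspace X - W" using w clp_top by blast
      fix w' assume w': "w' \<in> topspace X - W" "clp w' \<subseteq> clp w"
      have "w' \<in> clp z" using clp_in[of w'] w' clp_trans[of w z] w by blast
      then show "clp w' = clp w" using m w' by blast
    qed
    then show ?thesis using w by blast
  qed
  have spQ: "spec_closed X (supp_of \<sigma> Q)" using iso1[OF thQ] by blast
  have "W \<noteq> supp_of \<sigma> Q" using PQ PW iso1[OF thQ] by auto
  moreover have "W \<subseteq> supp_of \<sigma> Q" using supp_of_mono[of P Q] PQ W_def by auto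
  ultimately obtain z where "z \<in> supp_of \<sigma> Q" "z \<notin> W" by blast
  then have "z \<in> topspace X - W" using spec_closed_top[OF spQ] by blast
  then obtain x where mx: "mini x" using claim2 by blast
  have xt: "x \<in> topspace X" "x \<notin> W" using mx mini_def by auto
  have "W = YY x"
  proof
    show "W \<subseteq> YY x" unfolding YY_def
      using spec_closed_top[OF spW] spec_closed_cl[OF spW] xt(2) by blast
    show "YY x \<subseteq> W"
    proof
      fix y assume y: "y \<in> YY x"
      show "y \<in> W"
      proof (rule ccontr)
        assume "y \<notin> W"
        then obtain w where mw: "mini w" and wy: "w \<in> clp y" using claim2 y unfolding YY_def by blast
        have "W \<union> clp w = W \<union> clp x" using claim1[OF mw] claim1[OF mx] by simp
        then have "x \<in> clp w" using clp_in[OF xt(1)] xt(2) by blast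
        then have "x \<in> clp y" using clp_trans[OF wy] by blast
        then show False using y unfolding YY_def by blast
      qed
    qed
  qed
  then show ?thesis using PW ff_eq[OF xt(1)] xt(1) by auto
qed

lemma ff_inj: "inj_on ff (topspace X)"
proof
  fix x y assume x: "x \<in> topspace X" and y: "y \<in> topspace X" and e: "ff x = ff y"
  have "YY x = YY y" using e ff_eq[OF x] ff_eq[OF y] iso2[OF YY_spec[of x]] iso2[OF YY_spec[of y]] by metis
  then have "x \<in> clp y" "y \<in> clp x" using clp_in x y unfolding YY_def by blast+
  then have "clp x = clp y" using clp_trans by blast
  then show "x = y" using clp_inj x y by blast
qed

lemma ff_ZZ: "M \<in> Ob C \<Longrightarrow> ff ` \<sigma> M = ZZ C {M}"
proof
  assume M: "M \<in> Ob C"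
  show "ff ` \<sigma> M \<subseteq> ZZ C {M}"
    using ff_prime closedin_subset[OF sclosed[OF M]] unfolding ZZ_def Spec_pts_def ff_def by blast
  show "ZZ C {M} \<subseteq> ff ` \<sigma> M"
  proof
    fix P assume "P \<in> ZZ C {M}"
    then have P: "prime_thick C P" "M \<notin> P" unfolding ZZ_def Spec_pts_def by auto
    then obtain x where "x \<in> topspace X" "P = ff x" using ff_surj by blast
    then show "P \<in> ff ` \<sigma> M" using P M unfolding ff_def by blast
  qed
qed

lemma top_spec: "topspace (Spec_tri C) = Spec_pts C"
  unfolding Spec_tri_def topology_generated_by_topspace by auto

lemma ZZ_closed: "closedin (Spec_tri C) (ZZ C E)"
  unfolding closedin_def top_spec
proof
  show "ZZ C E \<subseteq> Spec_pts C" unfolding ZZ_def by blast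
  show "openin (Spec_tri C) (Spec_pts C - ZZ C E)"
    unfolding Spec_tri_def by (rule topology_generated_by_Basis) blast
qed

lemma ff_cont: "continuous_map X (Spec_tri C) ff"
  unfolding Spec_tri_def
proof (rule continuous_on_generated_topo)
  show "ff ` topspace X \<subseteq> \<Union> (insert (Spec_pts C) {Spec_pts C - ZZ C E |E. True})"
    using ff_prime unfolding Spec_pts_def by blast
  fix U assume "U \<in> insert (Spec_pts C) {Spec_pts C - ZZ C E |E. True}"
  then consider "U = Spec_pts C" | E where "U = Spec_pts C - ZZ C E" by blast
  then show "openin X (ff -` U \<inter> topspace X)"
  proof cases
    case 1
    then have "ff -` U \<inter> topspace X = topspace X" using ff_prime unfolding Spec_pts_def by blast
    then show ?thesis by simp
  next
    case 2
    define K where "K = \<Inter> (insert (topspace X) (\<sigma> ` (E \<inter> Ob C)))"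
    have cK: "closedin X K" unfolding K_def
      by (rule closedin_Inter) (auto intro: sclosed)
    have "ff -` U \<inter> topspace X = topspace X - K"
      using ff_prime unfolding 2 K_def ZZ_def Spec_pts_def ff_def by blast
    then show ?thesis using cK by (simp add: openin_diff)
  qed
qed

lemma ff_closed: "closed_map X (Spec_tri C) ff"
  unfolding closed_map_def
proof (intro allI)
  fix K
  show "closedin X K \<longrightarrow> closedin (Spec_tri C) (ff ` K)"
  proof (induct K rule: wf_induct[OF wfR])
    case (1 K)
    show ?case
    proof
      assume cK: "closedin X K"
      show "closedin (Spec_tri C) (ff ` K)"
      proof (cases "irreducible_in X K")
        case True
        then obtain x where x: "x \<in> topspace X" "clp x = K"
          using sober cK unfolding sober_space_def clp_def by blast
        have "x \<in> K" using x clp_in by blast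
        then have "x \<in> supp_of \<sigma> (supp_inv C \<sigma> K)" using iso2[OF spec_closed_closed[OF cK]] by simp
        then obtain M where M: "M \<in> Ob C" "\<sigma> M \<subseteq> K" "x \<in> \<sigma> M"
          unfolding supp_of_def supp_inv_def by blast
        have "K = \<sigma> M" using clp_min[OF sclosed[OF M(1)] M(3)] x M by blast
        then show ?thesis using ff_ZZ[OF M(1)] ZZ_closed by simp
      next
        case False
        show ?thesis
        proof (cases "K = {}")
          case True then show ?thesis by simp
        next
          case ne: False
          with False obtain Z1 Z2 where Z: "closedin X Z1" "closedin X Z2" "K = Z1 \<union> Z2" "K \<noteq> Z1" "K \<noteq> Z2"
            unfolding irreducible_in_def by blast
          have "closedin (Spec_tri C) (ff ` Z1)" "closedin (Spec_tri C) (ff ` Z2)"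
            using 1 Z cK by blast+
          then show ?thesis using Z(3) by (simp add: image_Un closedin_Un)
        qed
      qed
    qed
  qed
qed

lemma homeo: "X homeomorphic_space Spec_tri C"
proof (rule homeomorphic_map_imp_homeomorphic_space)
  show "homeomorphic_map X (Spec_tri C) ff"
  proof (rule bijective_closed_imp_homeomorphic_map[OF ff_cont ff_closed _ ff_inj])
    show "ff ` topspace X = topspace (Spec_tri C)"
      unfolding top_spec Spec_pts_def using ff_prime ff_surj by blast
  qed
qed

end

theorem theorem2p16:
  fixes C :: "('o, 'm) tricat" and X :: "'b topology" and \<sigma> :: "'o \<Rightarrow> 'b set"
  assumes "is_triangulated C"
    and "classifying C X \<sigma>"
  shows "X homeomorphic_space Spec_tri C"
proof -
  interpret cls C X \<sigma> using assms(2) by unfold_locales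
  show ?thesis by (rule homeo)
qed

end
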